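(* Let $k\ge1$ and $n\ge k+1$. Every permutation $\sigma\in\mathcal{S}_{n,k}^{1\prec n}(1324)$ can be written uniquely as $\sigma=\sigma_1\odot(\sigma_2\odot(\cdots\odot\sigma_k))$ where each $\sigma_j$ is a primitive, i.e. $\sigma_j\in\mathcal{S}_{m_j,1}^{1\prec m_j}(1324)$ for some $m_j\ge2$ (and then $m_1+\cdots+m_k=n+k-1$).
   Context: $\mathcal{S}_n(1324)$ denotes the set of permutations of $\{1,\dots,n\}$ (in one-line notation) avoiding the pattern $1324$. For $a,k\ge1$, $\mathcal{S}_{n,k}^{a\prec n}(1324)$ is the set of $\sigma\in\mathcal{S}_n(1324)$ with $\sigma^{-1}(n)-\sigma^{-1}(a)=k$ and $\sigma^{-1}(b)>\sigma^{-1}(n)$ for all $b\in\{1,\dots,a-1\}$. Elements of $\mathcal{S}_{m,1}^{1\prec m}(1324)$ are called primitives; such a permutation has the form $\sigma_1=\pi_1\,1\,m\,\tau_1$. Given a primitive $\sigma_1=\pi_1\,1\,m\,\tau_1$ of size $m$ and $\sigma_2\in\mathcal{S}_\ell(1324)$ of the form $\sigma_2=\pi_2\,1\,\theta_2\,\ell\,\tau_2$ (words possibly empty), the product is $\sigma_1\odot\sigma_2=\widehat{\pi}_2\,\pi_1\,1\,m\,\widehat{\theta}_2\,n\,\widehat{\tau}_2\,\tau_1$, where $n=\ell+m-1$ and hats denote adding $m-1$ to each entry. *)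

theory Defs
  imports Main
begin

definition is_perm :: "nat \<Rightarrow> nat list \<Rightarrow> bool" where
  "is_perm n xs \<longleftrightarrow> length xs = n \<and> distinct xs \<and> set xs = {1..n}"

definition contains_1324 :: "nat list \<Rightarrow> bool" where
  "contains_1324 xs \<longleftrightarrow> (\<exists>i j k l. i < j \<and> j < k \<and> k < l \<and> l < length xs \<and>
      xs ! i < xs ! k \<and> xs ! k < xs ! j \<and> xs ! j < xs ! l)"

definition avoids_1324 :: "nat \<Rightarrow> nat list set" where
  "avoids_1324 n = {xs. is_perm n xs \<and> \<not> contains_1324 xs}"

text \<open>Position (0-based) of value v, i.e. sigma^{-1}(v) - 1.\<close>
definition pos :: "nat list \<Rightarrow> nat \<Rightarrow> nat" where
  "pos xs v = (LEAST i. i < length xs \<and> xs ! i = v)"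

definition S_prec :: "nat \<Rightarrow> nat \<Rightarrow> nat \<Rightarrow> nat list set" where
  "S_prec n k a = {xs \<in> avoids_1324 n. int (pos xs n) - int (pos xs a) = int k \<and>
      (\<forall>b\<in>{1..<a}. pos xs b > pos xs n)}"

definition primitive :: "nat list \<Rightarrow> bool" where
  "primitive p \<longleftrightarrow> (\<exists>m\<ge>2. p \<in> S_prec m 1 1)"

text \<open>The product sigma1 \<odot> sigma2, for sigma1 = pi1 1 m tau1 primitive of size m and
  sigma2 = pi2 1 theta2 l tau2.\<close>
definition odot :: "nat list \<Rightarrow> nat list \<Rightarrow> nat list" where
  "odot s1 s2 = (let m = length s1; l = length s2;
      i1 = pos s1 1; pi1 = take i1 s1; tau1 = drop (i1 + 2) s1;
      j1 = pos s2 1; jl = pos s2 l;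
      pi2 = take j1 s2; theta2 = take (jl - j1 - 1) (drop (j1 + 1) s2);
      tau2 = drop (jl + 1) s2;
      hat = map (\<lambda>x. x + (m - 1))
    in hat pi2 @ pi1 @ [1, m] @ hat theta2 @ [l + m - 1] @ hat tau2 @ tau1)"

fun odot_chain :: "nat list list \<Rightarrow> nat list" where
  "odot_chain [] = []"
| "odot_chain [p] = p"
| "odot_chain (p # ps) = odot p (odot_chain ps)"

end

theory Submission
  imports Defs "HOL-Library.Sublist"
begin


lemma pos_eq: assumes "distinct xs" "xs = A @ v # B" shows "pos xs v = length A"
  unfolding pos_def
proof (rule Least_equality)
  show "length A < length xs \<and> xs ! length A = v" using assms by simp
next
  fix i assume "i < length xs \<and> xs ! i = v"
  then have "xs ! i = xs ! length A" "i < length xs" "length A < length xs" using assms by auto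
  then have "i = length A" using assms(1) nth_eq_iff_index_eq by blast
  then show "length A \<le> i" by simp
qed

lemma pos_in: assumes "v \<in> set xs" shows "pos xs v < length xs \<and> xs ! pos xs v = v"
  unfolding pos_def
proof (rule LeastI_ex)
  show "\<exists>x. x < length xs \<and> xs ! x = v" using assms by (simp add: in_set_conv_nth)
qed

lemma split3: assumes "i < j" "j < length xs"
  shows "xs = take i xs @ xs!i # take (j-i-1) (drop (Suc i) xs) @ xs!j # drop (Suc j) xs"
proof -
  have 1: "xs = take j xs @ xs!j # drop (Suc j) xs" using assms by (simp add: id_take_nth_drop)
  have "take j xs = take i (take j xs) @ (take j xs)!i # drop (Suc i) (take j xs)"
    by (rule id_take_nth_drop) (use assms in simp)
  also have "\<dots> = take i xs @ xs!i # take (j-i-1) (drop (Suc i) xs)"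
    using assms by (simp add: drop_take min_def)
  finally show ?thesis using 1 by (metis append.assoc append_Cons)
qed

lemma subseq_Cons_nth: "subseq (x#ys) xs \<longleftrightarrow> (\<exists>i<length xs. xs!i = x \<and> subseq ys (drop (Suc i) xs))"
proof (induction xs)
  case Nil then show ?case by simp
next
  case (Cons z zs)
  show ?case
  proof
    assume "subseq (x#ys) (z#zs)"
    then consider "x = z" "subseq ys zs" | "subseq (x#ys) zs"
      by (metis subseq_Cons2_iff)
    then show "\<exists>i<length (z#zs). (z#zs)!i = x \<and> subseq ys (drop (Suc i) (z#zs))"
    proof cases
      case 1 then show ?thesis by (intro exI[of _ 0]) auto
    next
      case 2 then obtain i where "i<length zs" "zs!i = x" "subseq ys (drop (Suc i) zs)" using Cons.IH by blast
      then show ?thesis by (intro exI[of _ "Suc i"]) auto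
    qed
  next
    assume "\<exists>i<length (z#zs). (z#zs)!i = x \<and> subseq ys (drop (Suc i) (z#zs))"
    then obtain i where i: "i<length (z#zs)" "(z#zs)!i = x" "subseq ys (drop (Suc i) (z#zs))" by blast
    show "subseq (x#ys) (z#zs)"
    proof (cases i)
      case 0 then show ?thesis using i by auto
    next
      case (Suc i') then have "subseq (x#ys) zs" using i Cons.IH by auto
      then show ?thesis by (rule list_emb_Cons)
    qed
  qed
qed

lemma subseq_Cons_drop: "subseq (x#ys) (drop p xs) \<longleftrightarrow> (\<exists>i. p \<le> i \<and> i<length xs \<and> xs!i = x \<and> subseq ys (drop (Suc i) xs))"
proof
  assume "subseq (x#ys) (drop p xs)"
  then obtain i where "i < length (drop p xs)" "drop p xs ! i = x" "subseq ys (drop (Suc i) (drop p xs))"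
    using subseq_Cons_nth by metis
  then show "\<exists>i. p \<le> i \<and> i<length xs \<and> xs!i = x \<and> subseq ys (drop (Suc i) xs)"
    by (intro exI[of _ "p+i"]) (auto simp: add.commute)
next
  assume "\<exists>i. p \<le> i \<and> i<length xs \<and> xs!i = x \<and> subseq ys (drop (Suc i) xs)"
  then obtain i where i: "p \<le> i" "i<length xs" "xs!i = x" "subseq ys (drop (Suc i) xs)" by blast
  have "drop (Suc (i-p)) (drop p xs) = drop (Suc i) xs" using i by simp
  then show "subseq (x#ys) (drop p xs)" using i
    by (subst subseq_Cons_nth) (intro exI[of _ "i-p"], auto)
qed

lemma contains_iff: "contains_1324 xs \<longleftrightarrow> (\<exists>a b c d. subseq [a,b,c,d] xs \<and> a<c \<and> c<b \<and> b<d)"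
proof -
  have e: "subseq [a,b,c,d] xs \<longleftrightarrow> (\<exists>i j k l. i < j \<and> j < k \<and> k < l \<and> l < length xs \<and>
      xs!i = a \<and> xs!j = b \<and> xs!k = c \<and> xs!l = d)" for a b c d
  proof -
    have "subseq [a,b,c,d] xs \<longleftrightarrow> subseq [a,b,c,d] (drop 0 xs)" by simp
    also have "\<dots> \<longleftrightarrow> (\<exists>i. i<length xs \<and> xs!i = a \<and> (\<exists>j. Suc i \<le> j \<and> j<length xs \<and> xs!j = b \<and>
       (\<exists>k. Suc j \<le> k \<and> k<length xs \<and> xs!k = c \<and> (\<exists>l. Suc k \<le> l \<and> l<length xs \<and> xs!l = d))))"
      unfolding subseq_Cons_drop by simp
    also have "\<dots> \<longleftrightarrow> (\<exists>i j k l. i < j \<and> j < k \<and> k < l \<and> l < length xs \<and>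
      xs!i = a \<and> xs!j = b \<and> xs!k = c \<and> xs!l = d)"
    proof
      assume "\<exists>i. i<length xs \<and> xs!i = a \<and> (\<exists>j. Suc i \<le> j \<and> j<length xs \<and> xs!j = b \<and>
       (\<exists>k. Suc j \<le> k \<and> k<length xs \<and> xs!k = c \<and> (\<exists>l. Suc k \<le> l \<and> l<length xs \<and> xs!l = d)))"
      then obtain i j k l where "Suc i \<le> j" "Suc j \<le> k" "Suc k \<le> l" "l<length xs"
        "xs!i = a" "xs!j = b" "xs!k = c" "xs!l = d" by blast
      then show "\<exists>i j k l. i < j \<and> j < k \<and> k < l \<and> l < length xs \<and>
      xs!i = a \<and> xs!j = b \<and> xs!k = c \<and> xs!l = d" by (intro exI[of _ i] exI[of _ j] exI[of _ k] exI[of _ l]) simp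
    next
      assume "\<exists>i j k l. i < j \<and> j < k \<and> k < l \<and> l < length xs \<and>
        xs!i = a \<and> xs!j = b \<and> xs!k = c \<and> xs!l = d"
      then obtain i j k l where h: "i < j" "j < k" "k < l" "l<length xs"
        "xs!i = a" "xs!j = b" "xs!k = c" "xs!l = d" by blast
      then show "\<exists>i. i<length xs \<and> xs!i = a \<and> (\<exists>j. Suc i \<le> j \<and> j<length xs \<and> xs!j = b \<and>
       (\<exists>k. Suc j \<le> k \<and> k<length xs \<and> xs!k = c \<and> (\<exists>l. Suc k \<le> l \<and> l<length xs \<and> xs!l = d)))"
        by (intro exI[of _ i] conjI exI[of _ j] exI[of _ k] exI[of _ l]) simp_all
    qed
    finally show ?thesis .
  qed
  show ?thesis unfolding contains_1324_def e by blast
qed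



lemma contains_map_sub: "contains_1324 (map (\<lambda>x. x - c) ys) \<Longrightarrow> contains_1324 ys"
proof -
  assume "contains_1324 (map (\<lambda>x. x - c) ys)"
  then obtain i j k l where h: "i < j" "j < k" "k < l" "l < length ys"
    "ys!i - c < ys!k - c" "ys!k - c < ys!j - c" "ys!j - c < ys!l - c"
    unfolding contains_1324_def by auto
  have "ys!i < ys!k" "ys!k < ys!j" "ys!j < ys!l" using h(5-7) by (meson diff_le_mono not_less)+
  then show ?thesis unfolding contains_1324_def using h(1-4) by blast
qed

lemma contains_subseq: "contains_1324 ys \<Longrightarrow> subseq ys xs \<Longrightarrow> contains_1324 xs"
  unfolding contains_iff using subseq_order.order_trans by blast

lemma contains_filter: "contains_1324 (filter P xs) \<Longrightarrow> contains_1324 xs"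
  using contains_subseq subseq_filter_left by blast

lemma odot_eq:
  assumes "distinct s1" "s1 = A @ 1 # m # T1" "m = length s1"
    "distinct s2" "s2 = P @ 1 # Q @ l # T2" "l = length s2"
  shows "odot s1 s2 = map (\<lambda>x. x + (m-1)) P @ A @ [1, m] @ map (\<lambda>x. x+(m-1)) Q @ [l+m-1]
      @ map (\<lambda>x. x+(m-1)) T2 @ T1"
proof -
  have p1: "pos s1 1 = length A" using pos_eq assms(1,2) by blast
  have p2: "pos s2 1 = length P" using pos_eq assms(4,5) by blast
  have p3: "pos s2 l = length P + Suc (length Q)"
    using pos_eq[of s2 "P @ 1 # Q" l T2] assms(4,5) by simp
  have p4: "pos s2 (length s2) = length P + Suc (length Q)" using p3 assms(6) by simp
  have p5: "pos s1 (Suc 0) = length A" "pos s2 (Suc 0) = length P" using p1 p2 by simp_all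
  show ?thesis unfolding odot_def Let_def p1 p2 p4 using assms(3,6)
    by (simp add: assms(2,5))
qed

lemma is_perm_S: "is_perm n xs \<Longrightarrow> v \<in> {1..n} \<Longrightarrow> v \<in> set xs"
  unfolding is_perm_def by auto

lemma sprec_struct:
  assumes "\<sigma> \<in> S_prec n k 1" "k \<ge> 1"
  shows "\<exists>\<alpha> \<beta> \<gamma>. \<sigma> = \<alpha> @ 1 # \<beta> @ n # \<gamma> \<and> length \<beta> = k - 1"
proof -
  have perm: "is_perm n \<sigma>" and d: "int (pos \<sigma> n) - int (pos \<sigma> 1) = int k"
    using assms unfolding S_prec_def avoids_1324_def by auto
  have "n \<noteq> 0"
  proof
    assume "n = 0" then have "\<sigma> = []" using perm unfolding is_perm_def by simp
    then show False using d assms(2) unfolding pos_def by simp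
  qed
  then have "1 \<in> set \<sigma>" "n \<in> set \<sigma>" using perm is_perm_S by auto
  then have a: "pos \<sigma> 1 < length \<sigma>" "\<sigma> ! pos \<sigma> 1 = 1" "pos \<sigma> n < length \<sigma>" "\<sigma> ! pos \<sigma> n = n"
    using pos_in by blast+
  define i j where "i = pos \<sigma> 1" and "j = pos \<sigma> n"
  have ij: "i < j" "j = i + k" using d assms(2) unfolding i_def j_def by auto
  have "\<sigma> = take i \<sigma> @ 1 # take (j-i-1) (drop (Suc i) \<sigma>) @ n # drop (Suc j) \<sigma>"
    using split3[of i j \<sigma>] ij a unfolding i_def j_def by simp
  moreover have "length (take (j-i-1) (drop (Suc i) \<sigma>)) = k - 1"
    using ij a unfolding i_def j_def by simp
  ultimately show ?thesis by blast
qed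

lemma prim_struct:
  assumes "primitive p"
  shows "\<exists>A T. p = A @ 1 # length p # T \<and> is_perm (length p) p \<and> length p \<ge> 2 \<and> \<not> contains_1324 p"
proof -
  obtain m where m: "m \<ge> 2" "p \<in> S_prec m 1 1" using assms unfolding primitive_def by blast
  then have perm: "is_perm m p" and nc: "\<not> contains_1324 p"
    unfolding S_prec_def avoids_1324_def by auto
  then have lm: "length p = m" unfolding is_perm_def by simp
  obtain \<alpha> \<beta> \<gamma> where "p = \<alpha> @ 1 # \<beta> @ m # \<gamma>" "length \<beta> = 0" using sprec_struct[OF m(2)] by auto
  then have "p = \<alpha> @ 1 # m # \<gamma>" by simp
  then show ?thesis using perm nc lm m(1) by (intro exI[of _ \<alpha>] exI[of _ \<gamma>]) simp
qed



lemma perm_parts: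
  assumes "is_perm m (A @ 1 # Q @ m # T)"
  shows "\<forall>x. (x \<in> set A \<or> x \<in> set Q \<or> x \<in> set T) \<longleftrightarrow> (x \<in> {1..m} \<and> x \<noteq> 1 \<and> x \<noteq> m)"
    and "m \<ge> 2"
proof -
  have d: "distinct (A @ 1 # Q @ m # T)" and s: "set (A @ 1 # Q @ m # T) = {1..m}"
    using assms unfolding is_perm_def by auto
  show "\<forall>x. (x \<in> set A \<or> x \<in> set Q \<or> x \<in> set T) \<longleftrightarrow> (x \<in> {1..m} \<and> x \<noteq> 1 \<and> x \<noteq> m)"
  proof (intro allI iffI)
    fix x assume "x \<in> set A \<or> x \<in> set Q \<or> x \<in> set T"
    then have "x \<in> set (A @ 1 # Q @ m # T)" by auto
    then have "x \<in> {1..m}" using s by blast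
    moreover have "1 \<notin> set A" "1 \<notin> set Q" "1 \<notin> set T" "m \<notin> set A" "m \<notin> set Q" "m \<notin> set T"
      using d by auto
    ultimately show "x \<in> {1..m} \<and> x \<noteq> 1 \<and> x \<noteq> m" using \<open>x \<in> set A \<or> x \<in> set Q \<or> x \<in> set T\<close> by blast
  next
    fix x assume "x \<in> {1..m} \<and> x \<noteq> 1 \<and> x \<noteq> m"
    then have "x \<in> set (A @ 1 # Q @ m # T)" using s by blast
    then show "x \<in> set A \<or> x \<in> set Q \<or> x \<in> set T" using \<open>x \<in> {1..m} \<and> x \<noteq> 1 \<and> x \<noteq> m\<close> by auto
  qed
  have "m \<noteq> 1" using d by auto
  moreover have "m \<in> set (A @ 1 # Q @ m # T)" by simp
  then have "m \<in> {1..m}" using s by blast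
  ultimately show "m \<ge> 2" by simp
qed

lemma glue:
  assumes p1: "is_perm m (A @ 1 # [] @ m # T1)" and p2: "is_perm l (P @ 1 # Q @ l # T2)"
  shows "is_perm (l+m-1) (map (\<lambda>x. x + (m-1)) P @ A @ [1, m] @ map (\<lambda>x. x+(m-1)) Q @ [l+m-1]
      @ map (\<lambda>x. x+(m-1)) T2 @ T1)" (is "is_perm _ ?s")
proof -
  note h1 = perm_parts[OF p1] and h2 = perm_parts[OF p2]
  have b1: "\<forall>x\<in>set A \<union> set T1. 2 \<le> x \<and> x < m" using h1(1) by force
  have b2: "\<forall>x\<in>set P \<union> set Q \<union> set T2. 2 \<le> x \<and> x < l" using h2(1) by force
  have lm: "length (A @ 1 # [] @ m # T1) = m" and ll: "length (P @ 1 # Q @ l # T2) = l"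
    using p1 p2 unfolding is_perm_def by blast+
  have len: "length ?s = l + m - 1" using lm ll by simp
  have "set ?s = {1..l+m-1}"
  proof (intro equalityI subsetI)
    fix x assume "x \<in> set ?s"
    then consider "x \<in> set A \<union> set T1" | "x = 1" | "x = m" | "x = l+m-1"
      | y where "y \<in> set P \<union> set Q \<union> set T2" "x = y + (m-1)"
      by auto
    then show "x \<in> {1..l+m-1}"
    proof cases
      case 1 then have "2 \<le> x" "x < m" using b1 by blast+
      then show ?thesis using h2(2) by simp
    next
      case 2 then show ?thesis using h1(2) h2(2) by simp
    next
      case 3 then show ?thesis using h1(2) h2(2) by simp
    next
      case 4 then show ?thesis using h1(2) h2(2) by simp
    next
      case 5 then have "2 \<le> y" "y < l" using b2 by blast+
      then show ?thesis unfolding atLeastAtMost_iff using 5(2) h1(2) by arith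
    qed
  next
    fix x assume x: "x \<in> {1..l+m-1}"
    show "x \<in> set ?s"
    proof (cases "x \<le> m")
      case True
      show ?thesis
      proof (cases "x = 1 \<or> x = m")
        case True then show ?thesis by auto
      next
        case False
        then have "x \<in> set A \<or> x \<in> set [] \<or> x \<in> set T1"
          using h1(1)[rule_format, of x] x \<open>x \<le> m\<close> by simp
        then show ?thesis by auto
      qed
    next
      case False
      show ?thesis
      proof (cases "x = l+m-1")
        case True then show ?thesis by simp
      next
        case ne: False
        have "x - (m-1) \<in> {1..l}" "x - (m-1) \<noteq> 1" "x - (m-1) \<noteq> l" using x False ne h1(2) by auto
        then have "x - (m-1) \<in> set P \<or> x - (m-1) \<in> set Q \<or> x - (m-1) \<in> set T2"
          using h2(1)[rule_format, of "x - (m-1)"] by blast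
        moreover have "x = x - (m-1) + (m-1)" using False by simp
        ultimately show ?thesis by (metis (no_types, lifting) Un_iff image_eqI list.set_intros(2) set_append set_map)
      qed
    qed
  qed
  moreover then have "card (set ?s) = length ?s" using len by (simp only: card_atLeastAtMost)
  then have "distinct ?s" by (rule card_distinct)
  ultimately show ?thesis unfolding is_perm_def using len by blast
qed

lemma odot_split:
  assumes p1: "is_perm m (A @ 1 # [] @ m # T1)" and p2: "is_perm l (P @ 1 # Q @ l # T2)"
  defines "s \<equiv> map (\<lambda>x. x + (m-1)) P @ A @ [1, m] @ map (\<lambda>x. x+(m-1)) Q @ [l+m-1]
      @ map (\<lambda>x. x+(m-1)) T2 @ T1"
  shows "filter (\<lambda>x. x \<le> m) s = A @ 1 # m # T1"
    and "map (\<lambda>x. x - (m-1)) (filter (\<lambda>x. m \<le> x) s) = P @ 1 # Q @ l # T2"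
proof -
  note h1 = perm_parts[OF p1] and h2 = perm_parts[OF p2]
  have b1: "\<forall>x\<in>set A \<union> set T1. 2 \<le> x \<and> x < m" using h1(1) by force
  have b2: "\<forall>x\<in>set P \<union> set Q \<union> set T2. 2 \<le> x \<and> x < l" using h2(1) by force
  have m2: "m \<ge> 2" and l2: "l \<ge> 2" using h1(2) h2(2) .
  have fe: "filter (\<lambda>x. x \<le> m) (map (\<lambda>x. x + (m-1)) X) = []"
    if "\<forall>x\<in>set X. 2 \<le> x" for X
    using that m2 by (auto simp: filter_empty_conv)
  have ft: "filter (\<lambda>x. x \<le> m) X = X" if "\<forall>x\<in>set X. 2 \<le> x \<and> x < m" for X
    using that by (intro filter_True) auto
  have ge: "filter (\<lambda>x. m \<le> x) (map (\<lambda>x. x + (m-1)) X) = map (\<lambda>x. x + (m-1)) X"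
    if "\<forall>x\<in>set X. 2 \<le> x" for X
    using that m2 by (intro filter_True) auto
  have gt: "filter (\<lambda>x. m \<le> x) X = []" if "\<forall>x\<in>set X. 2 \<le> x \<and> x < m" for X
    using that by (auto simp: filter_empty_conv)
  have bP: "\<forall>x\<in>set P. 2 \<le> x" and bQ: "\<forall>x\<in>set Q. 2 \<le> x" and bT: "\<forall>x\<in>set T2. 2 \<le> x"
    using b2 by auto
  have bA: "\<forall>x\<in>set A. 2 \<le> x \<and> x < m" and bT1: "\<forall>x\<in>set T1. 2 \<le> x \<and> x < m"
    using b1 by auto
  have mm: "map (\<lambda>x. x - (m-1)) (map (\<lambda>x. x + (m-1)) X) = X" for X :: "nat list"
    by (induction X) auto
  show "filter (\<lambda>x. x \<le> m) s = A @ 1 # m # T1"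
    unfolding s_def filter_append using fe[OF bP] fe[OF bQ] fe[OF bT] ft[OF bA] ft[OF bT1] m2 l2 by simp
  show "map (\<lambda>x. x - (m-1)) (filter (\<lambda>x. m \<le> x) s) = P @ 1 # Q @ l # T2"
  proof -
    have F: "filter (\<lambda>x. m \<le> x) s = map (\<lambda>x. x + (m-1)) P @ [m] @ map (\<lambda>x. x + (m-1)) Q @ [l+m-1]
      @ map (\<lambda>x. x + (m-1)) T2"
      unfolding s_def filter_append using ge[OF bP] ge[OF bQ] ge[OF bT] gt[OF bA] gt[OF bT1] m2 l2
      by simp
    show ?thesis unfolding F map_append mm using m2 l2 by simp
  qed
qed



lemma odot_glue:
  assumes "primitive p" "is_perm l s2" "s2 = P @ 1 # Q @ l # T2"
  obtains A T1 where "p = A @ 1 # length p # T1"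
    "odot p s2 = map (\<lambda>x. x + (length p-1)) P @ A @ [1, length p] @ map (\<lambda>x. x+(length p-1)) Q
      @ [l+length p-1] @ map (\<lambda>x. x+(length p-1)) T2 @ T1"
    "is_perm (length p) (A @ 1 # [] @ length p # T1)"
    "length p \<ge> 2"
proof -
  obtain A T1 where a: "p = A @ 1 # length p # T1" "is_perm (length p) p" "length p \<ge> 2"
    using prim_struct[OF assms(1)] by blast
  have d1: "distinct p" using a(2) unfolding is_perm_def by blast
  have d2: "distinct s2" "l = length s2" using assms(2) unfolding is_perm_def by auto
  have "odot p s2 = map (\<lambda>x. x + (length p-1)) P @ A @ [1, length p] @ map (\<lambda>x. x+(length p-1)) Q
      @ [l+length p-1] @ map (\<lambda>x. x+(length p-1)) T2 @ T1"
    by (rule odot_eq[OF d1 a(1) refl d2(1) assms(3) d2(2)])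
  moreover have "is_perm (length p) (A @ 1 # [] @ length p # T1)" using a(1,2) by simp
  ultimately show ?thesis using that a(1,3) by blast
qed

lemma chain:
  "ps \<noteq> [] \<Longrightarrow> \<forall>p\<in>set ps. primitive p \<Longrightarrow> \<exists>P Q T. odot_chain ps = P @ 1 # Q @ length (odot_chain ps) # T
    \<and> length Q = length ps - 1 \<and> is_perm (length (odot_chain ps)) (odot_chain ps)
    \<and> length (odot_chain ps) + (length ps - 1) = sum_list (map length ps)"
proof (induction ps rule: odot_chain.induct)
  case 1 then show ?case by simp
next
  case (2 p)
  obtain A T where a: "p = A @ 1 # length p # T" "is_perm (length p) p"
    using prim_struct 2 by force
  show ?case using a by (intro exI[of _ A] exI[of _ "[]"] exI[of _ T]) simp
next
  case (3 p q ps)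
  define s2 where "s2 = odot_chain (q#ps)"
  define l where "l = length s2"
  obtain P Q T2 where ih: "s2 = P @ 1 # Q @ l # T2" "length Q = length (q#ps) - 1"
    "is_perm l s2" "l + (length (q#ps) - 1) = sum_list (map length (q#ps))"
    using 3 unfolding s2_def l_def by auto
  define m where "m = length p"
  obtain A T1 where g: "odot p s2 = map (\<lambda>x. x + (m-1)) P @ A @ [1, m] @ map (\<lambda>x. x+(m-1)) Q
      @ [l+m-1] @ map (\<lambda>x. x+(m-1)) T2 @ T1"
    "is_perm m (A @ 1 # [] @ m # T1)" "m \<ge> 2"
  proof -
    have pr: "primitive p" using "3.prems"(2) by simp
    show ?thesis using odot_glue[OF pr ih(3) ih(1)] that unfolding m_def[symmetric] by blast
  qed
  have e: "odot_chain (p#q#ps) = odot p s2" unfolding s2_def by simp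
  have pp: "is_perm (l+m-1) (odot p s2)" unfolding g(1) using glue[OF g(2)] ih(1,3) by simp
  then have len: "length (odot p s2) = l + m - 1" unfolding is_perm_def by blast
  have "odot p s2 = (map (\<lambda>x. x + (m-1)) P @ A) @ 1 # (m # map (\<lambda>x. x+(m-1)) Q)
      @ length (odot p s2) # (map (\<lambda>x. x+(m-1)) T2 @ T1)" unfolding len by (simp add: g(1))
  moreover have "length (m # map (\<lambda>x. x+(m-1)) Q) = length (p#q#ps) - 1" using ih(2) by simp
  moreover have "length (odot p s2) + (length (p#q#ps) - 1) = sum_list (map length (p#q#ps))"
    using len ih(4) g(3) unfolding m_def by simp
  ultimately show ?case unfolding e using pp len by metis
qed

lemma decomp:
  assumes "primitive p" "ps \<noteq> []" "\<forall>q\<in>set ps. primitive q" "\<sigma> = odot p (odot_chain ps)"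
  shows "\<sigma> ! Suc (pos \<sigma> 1) = length p \<and> filter (\<lambda>x. x \<le> length p) \<sigma> = p
    \<and> map (\<lambda>x. x - (length p - 1)) (filter (\<lambda>x. length p \<le> x) \<sigma>) = odot_chain ps"
proof -
  define s2 where "s2 = odot_chain ps"
  define l where "l = length s2"
  obtain P Q T2 where ih: "s2 = P @ 1 # Q @ l # T2" "is_perm l s2"
    using chain[OF assms(2,3)] unfolding s2_def l_def by auto
  define m where "m = length p"
  obtain A T1 where g: "p = A @ 1 # m # T1" "odot p s2 = map (\<lambda>x. x + (m-1)) P @ A @ [1, m] @ map (\<lambda>x. x+(m-1)) Q
      @ [l+m-1] @ map (\<lambda>x. x+(m-1)) T2 @ T1"
    "is_perm m (A @ 1 # [] @ m # T1)" "m \<ge> 2"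
    using odot_glue[OF assms(1) ih(2) ih(1)] unfolding m_def[symmetric] by blast
  have pp: "is_perm (l+m-1) \<sigma>" unfolding assms(4) s2_def[symmetric] g(2) using glue[OF g(3)] ih by simp
  have "\<sigma> = (map (\<lambda>x. x + (m-1)) P @ A) @ 1 # (m # map (\<lambda>x. x+(m-1)) Q
      @ [l+m-1] @ map (\<lambda>x. x+(m-1)) T2 @ T1)" unfolding assms(4) s2_def[symmetric] g(2) by simp
  moreover have "distinct \<sigma>" using pp unfolding is_perm_def by blast
  ultimately have "pos \<sigma> 1 = length (map (\<lambda>x. x + (m-1)) P @ A)" using pos_eq by blast
  then have 1: "\<sigma> ! Suc (pos \<sigma> 1) = m" unfolding assms(4) s2_def[symmetric] g(2)
    by (simp add: nth_append)
  have 2: "filter (\<lambda>x. x \<le> m) \<sigma> = p" "map (\<lambda>x. x - (m - 1)) (filter (\<lambda>x. m \<le> x) \<sigma>) = s2"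
    unfolding assms(4) s2_def[symmetric] g(2) using odot_split[OF g(3)] ih g(1) by simp_all
  show ?thesis using 1 2 unfolding m_def s2_def by blast
qed

lemma uniq:
  "\<forall>qs. length ps = length qs \<longrightarrow> ps \<noteq> [] \<longrightarrow> (\<forall>p\<in>set ps. primitive p) \<longrightarrow> (\<forall>p\<in>set qs. primitive p)
     \<longrightarrow> odot_chain ps = odot_chain qs \<longrightarrow> ps = qs"
proof (induction ps)
  case Nil then show ?case by simp
next
  case (Cons p ps)
  show ?case
  proof (intro allI impI)
    fix qs assume h: "length (p#ps) = length qs" "p#ps \<noteq> []" "\<forall>p\<in>set (p#ps). primitive p"
      "\<forall>p\<in>set qs. primitive p" "odot_chain (p#ps) = odot_chain qs"
    obtain q qs' where qs: "qs = q # qs'" using h(1) by (cases qs) auto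
    show "p # ps = qs"
    proof (cases ps)
      case Nil then have "qs' = []" using h(1) qs by simp
      then show ?thesis using h(5) qs Nil by simp
    next
      case (Cons p2 ps2)
      then obtain q2 qs2 where qs': "qs' = q2 # qs2" using h(1) qs by (cases qs') auto
      define \<sigma> where "\<sigma> = odot_chain (p#ps)"
      have s1: "\<sigma> = odot p (odot_chain ps)" unfolding \<sigma>_def Cons by simp
      have s2: "\<sigma> = odot q (odot_chain qs')" unfolding \<sigma>_def h(5) qs qs' by simp
      have pq: "primitive p" "primitive q" "\<forall>x\<in>set ps. primitive x" "\<forall>x\<in>set qs'. primitive x"
        using h(3,4) qs by auto
      have ne: "ps \<noteq> []" "qs' \<noteq> []" using Cons qs' by auto
      note D1 = decomp[OF pq(1) ne(1) pq(3) s1] and D2 = decomp[OF pq(2) ne(2) pq(4) s2]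
      have "length p = length q" using D1 D2 by simp
      then have "p = q" "odot_chain ps = odot_chain qs'" using D1 D2 by metis+
      moreover have "ps = qs'" using Cons.IH ne h(1) pq \<open>odot_chain ps = odot_chain qs'\<close> qs by auto
      ultimately show ?thesis using qs by simp
    qed
  qed
qed



lemma sub4: "subseq [a,b,c,d] (A @ a # B @ b # C @ c # D @ d # F)"
  by (auto intro!: list_emb_append2 list_emb_Cons2)

lemma nc_sub: "\<not> contains_1324 xs \<Longrightarrow> subseq [a,b,c,d] xs \<Longrightarrow> a < c \<Longrightarrow> c < b \<Longrightarrow> b < d \<Longrightarrow> False"
  unfolding contains_iff by blast

lemma split_lt:
  fixes m :: nat
  assumes "\<And>h y u v. xs = u @ h # v \<Longrightarrow> h < m \<Longrightarrow> y \<in> set v \<Longrightarrow> m < y \<Longrightarrow> False"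
    and "m \<notin> set xs"
  shows "xs = takeWhile (\<lambda>x. m < x) xs @ dropWhile (\<lambda>x. m < x) xs
    \<and> (\<forall>x\<in>set (takeWhile (\<lambda>x. m < x) xs). m < x) \<and> (\<forall>x\<in>set (dropWhile (\<lambda>x. m < x) xs). x < m)"
proof (intro conjI ballI)
  show "xs = takeWhile (\<lambda>x. m < x) xs @ dropWhile (\<lambda>x. m < x) xs" by simp
  show "m < x" if "x \<in> set (takeWhile (\<lambda>x. m < x) xs)" for x using that set_takeWhileD by fastforce
  fix y assume y: "y \<in> set (dropWhile (\<lambda>x. m < x) xs)"
  show "y < m"
  proof (rule ccontr)
    assume ny: "\<not> y < m"
    obtain h r where hr: "dropWhile (\<lambda>x. m < x) xs = h # r" using y by (cases "dropWhile (\<lambda>x. m < x) xs") auto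
    then have xs: "xs = takeWhile (\<lambda>x. m < x) xs @ h # r" and nh: "\<not> m < h"
      by (simp_all add: dropWhile_eq_Cons_conv)
    have "h \<in> set xs" "y \<in> set xs" using xs y hr by (metis in_set_conv_decomp, metis set_dropWhileD)
    then have "h \<noteq> m" "y \<noteq> m" using assms(2) by auto
    then have hm: "h < m" and ym: "m < y" using nh ny by auto
    then have "y \<noteq> h" by simp
    then have "y \<in> set r" using y hr by simp
    then show False using assms(1)[OF xs hm _ ym] by blast
  qed
qed

lemma step:
  assumes S: "\<sigma> \<in> S_prec n k 1" and k2: "k \<ge> 2"
  shows "\<exists>s1 s2. primitive s1 \<and> s2 \<in> S_prec (n - length s1 + 1) (k-1) 1 \<and> \<sigma> = odot s1 s2"
proof -
  have perm: "is_perm n \<sigma>" and nc: "\<not> contains_1324 \<sigma>"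
    using S unfolding S_prec_def avoids_1324_def by auto
  have d: "distinct \<sigma>" and st: "set \<sigma> = {1..n}" and ln: "length \<sigma> = n"
    using perm unfolding is_perm_def by auto
  obtain \<alpha> \<beta> \<gamma> where sg0: "\<sigma> = \<alpha> @ 1 # \<beta> @ n # \<gamma>" and lb: "length \<beta> = k - 1"
    using sprec_struct[OF S] k2 by auto
  obtain m \<beta>' where b: "\<beta> = m # \<beta>'" using lb k2 by (cases \<beta>) auto
  have sg: "\<sigma> = \<alpha> @ 1 # m # \<beta>' @ n # \<gamma>" using sg0 b by simp
  have dd: "distinct (\<alpha> @ 1 # m # \<beta>' @ n # \<gamma>)" using d sg by simp
  have inS: "x \<in> {1..n}" if "x \<in> set (\<alpha> @ 1 # m # \<beta>' @ n # \<gamma>)" for x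
  proof -
    have "x \<in> set \<sigma>" using that sg by simp
    then show ?thesis using st by blast
  qed
  have m1: "m \<noteq> 1" "m \<noteq> n" "1 \<noteq> n" using dd by auto
  have mn: "m \<le> n" "2 \<le> m" using inS[of m] m1 by auto
  have n1: "1 \<notin> set \<alpha>" "1 \<notin> set \<beta>'" "1 \<notin> set \<gamma>" "m \<notin> set \<alpha>" "m \<notin> set \<beta>'" "m \<notin> set \<gamma>"
    "n \<notin> set \<alpha>" "n \<notin> set \<beta>'" "n \<notin> set \<gamma>" using dd by auto
  have bnd: "1 \<le> x \<and> x \<le> n" if "x \<in> set \<alpha> \<or> x \<in> set \<beta>' \<or> x \<in> set \<gamma>" for x
    using inS[of x] that by auto
  have bB: "\<forall>x\<in>set \<beta>'. m < x"
  proof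
    fix x assume x: "x \<in> set \<beta>'"
    show "m < x"
    proof (rule ccontr)
      assume "\<not> m < x"
      moreover have "x \<noteq> m" "x \<noteq> 1" "x \<noteq> n" using x n1 by auto
      ultimately have "1 < x" "x < m" "m < n" using bnd[of x] x mn m1 by auto
      obtain u v where "\<beta>' = u @ x # v" using x by (metis in_set_conv_decomp)
      then have "subseq [1,m,x,n] \<sigma>" unfolding sg using sub4[of 1 m x n "\<alpha>" "[]" u "v"] by simp
      then show False using nc_sub[OF nc] \<open>1 < x\<close> \<open>x < m\<close> \<open>m < n\<close> by blast
    qed
  qed
  define aB aS where "aB = takeWhile (\<lambda>x. m < x) \<alpha>" and "aS = dropWhile (\<lambda>x. m < x) \<alpha>"
  have sa: "\<alpha> = aB @ aS \<and> (\<forall>x\<in>set aB. m < x) \<and> (\<forall>x\<in>set aS. x < m)"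
    unfolding aB_def aS_def
  proof (rule split_lt[OF _ n1(4)])
    fix h y u v assume h: "\<alpha> = u @ h # v" "h < m" "y \<in> set v" "m < y"
    obtain v1 v2 where v: "v = v1 @ y # v2" using h(3) by (metis in_set_conv_decomp)
    have "y \<noteq> n" using n1 h v by auto
    then have "y < n" using bnd[of y] h v by auto
    have "subseq [h,y,m,n] \<sigma>" unfolding sg h(1) v using sub4[of h y m n u v1 "v2 @ [1]" "\<beta>'"] by simp
    then show False using nc_sub[OF nc] h \<open>y < n\<close> by blast
  qed
  define gB gS where "gB = takeWhile (\<lambda>x. m < x) \<gamma>" and "gS = dropWhile (\<lambda>x. m < x) \<gamma>"
  have sgm: "\<gamma> = gB @ gS \<and> (\<forall>x\<in>set gB. m < x) \<and> (\<forall>x\<in>set gS. x < m)"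
    unfolding gB_def gS_def
  proof (rule split_lt[OF _ n1(6)])
    fix h y u v assume h: "\<gamma> = u @ h # v" "h < m" "y \<in> set v" "m < y"
    obtain v1 v2 where v: "v = v1 @ y # v2" using h(3) by (metis in_set_conv_decomp)
    have "h \<noteq> 1" using n1 h by auto
    then have "1 < h" using bnd[of h] h by auto
    have "subseq [1,m,h,y] \<sigma>" unfolding sg h(1) v
      using sub4[of 1 m h y "\<alpha>" "[]" "\<beta>' @ n # u" v1 v2] by simp
    then show False using nc_sub[OF nc] h \<open>1 < h\<close> by blast
  qed
  have sfull: "\<sigma> = aB @ aS @ 1 # m # \<beta>' @ n # gB @ gS" using sg sa sgm by simp
  have aBb: "\<forall>x\<in>set aB. m < x" and aSb: "\<forall>x\<in>set aS. x < m"
    and gBb: "\<forall>x\<in>set gB. m < x" and gSb: "\<forall>x\<in>set gS. x < m" using sa sgm by auto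
  define s1 where "s1 = aS @ 1 # m # gS"
  define unhat where "unhat = (\<lambda>x::nat. x - (m-1))"
  define l where "l = n - m + 1"
  define s2 where "s2 = map unhat aB @ 1 # map unhat \<beta>' @ l # map unhat gB"
  have fe: "filter (\<lambda>x. x \<le> m) X = []" if "\<forall>x\<in>set X. m < x" for X
    using that by (auto simp: filter_empty_conv)
  have ft: "filter (\<lambda>x. x \<le> m) X = X" if "\<forall>x\<in>set X. x < m" for X
    using that by (intro filter_True) auto
  have ge: "filter (\<lambda>x. m \<le> x) X = X" if "\<forall>x\<in>set X. m < x" for X
    using that by (intro filter_True) auto
  have gt: "filter (\<lambda>x. m \<le> x) X = []" if "\<forall>x\<in>set X. x < m" for X
    using that by (auto simp: filter_empty_conv)
  have f1: "filter (\<lambda>x. x \<le> m) \<sigma> = s1" unfolding sfull s1_def filter_append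
    using fe[OF aBb] ft[OF aSb] fe[OF gBb] ft[OF gSb] fe[OF bB] mn m1 by simp
  have f2: "map unhat (filter (\<lambda>x. m \<le> x) \<sigma>) = s2" unfolding sfull s2_def filter_append
    using ge[OF aBb] gt[OF aSb] ge[OF gBb] gt[OF gSb] ge[OF bB] mn m1 by (simp add: unhat_def l_def)
  have ds1: "distinct s1" unfolding f1[symmetric] using d by simp
  have ss1: "set s1 = {1..m}" unfolding f1[symmetric] using st mn by auto
  have ls1: "length s1 = m" using distinct_card[OF ds1] ss1 by simp
  have ps1: "is_perm m s1" unfolding is_perm_def using ds1 ss1 ls1 by blast
  have nc1: "\<not> contains_1324 s1" using nc contains_filter f1 by metis
  have pos1: "pos s1 1 = length aS" using pos_eq[OF ds1] s1_def by blast
  have pos2: "pos s1 m = Suc (length aS)" using pos_eq[OF ds1, of "aS @ [1]" m gS] s1_def by simp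
  have prim: "primitive s1" unfolding primitive_def S_prec_def avoids_1324_def
    using mn ps1 nc1 pos1 pos2 by auto
  have inj: "inj_on unhat {x. m \<le> x}" unfolding unhat_def inj_on_def by auto
  have ds2: "distinct s2" unfolding f2[symmetric] using d
    by (simp add: distinct_map) (rule inj_on_subset[OF inj], auto)
  have ss2: "set s2 = {1..l}"
  proof -
    have "set s2 = unhat ` {x\<in>{1..n}. m \<le> x}" unfolding f2[symmetric] using st by simp
    also have "\<dots> = {1..l}"
    proof (intro equalityI subsetI)
      fix y assume "y \<in> unhat ` {x\<in>{1..n}. m \<le> x}"
      then show "y \<in> {1..l}" unfolding unhat_def l_def using mn by auto
    next
      fix y assume y: "y \<in> {1..l}"
      have "y + (m-1) \<in> {x\<in>{1..n}. m \<le> x}" using y mn unfolding l_def by auto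
      moreover have "y = unhat (y + (m-1))" unfolding unhat_def by simp
      ultimately show "y \<in> unhat ` {x\<in>{1..n}. m \<le> x}" by blast
    qed
    finally show ?thesis .
  qed
  have ls2: "length s2 = l" using distinct_card[OF ds2] ss2 by simp
  have ps2: "is_perm l s2" unfolding is_perm_def using ds2 ss2 ls2 by blast
  have nc2: "\<not> contains_1324 s2" using nc contains_filter contains_map_sub f2 unfolding unhat_def by metis
  have q1: "pos s2 1 = length aB" using pos_eq[OF ds2] s2_def by (metis length_map)
  have q2: "pos s2 l = length aB + Suc (length \<beta>')"
    using pos_eq[OF ds2, of "map unhat aB @ 1 # map unhat \<beta>'" l "map unhat gB"] s2_def by simp
  have "length \<beta>' = k - 2" using lb b by simp
  then have s2S: "s2 \<in> S_prec l (k-1) 1" unfolding S_prec_def avoids_1324_def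
    using ps2 nc2 q1 q2 k2 by auto
  have hu: "map (\<lambda>x. x + (m-1)) (map unhat X) = X" if "\<forall>x\<in>set X. m < x" for X
    using that unfolding unhat_def by (induction X) auto
  have "odot s1 s2 = map (\<lambda>x. x + (m-1)) (map unhat aB) @ aS @ [1, m] @ map (\<lambda>x. x+(m-1)) (map unhat \<beta>')
      @ [l+m-1] @ map (\<lambda>x. x+(m-1)) (map unhat gB) @ gS"
    by (rule odot_eq[OF ds1 s1_def ls1[symmetric] ds2 s2_def ls2[symmetric]])
  also have "\<dots> = \<sigma>" unfolding sfull hu[OF aBb] hu[OF bB] hu[OF gBb] l_def using mn by simp
  finally have "\<sigma> = odot s1 s2" by simp
  moreover have "n - length s1 + 1 = l" using ls1 l_def by simp
  ultimately show ?thesis using prim s2S by metis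
qed

lemma exist:
  "\<forall>\<sigma> n. k \<ge> 1 \<longrightarrow> \<sigma> \<in> S_prec n k 1 \<longrightarrow> (\<exists>ps. length ps = k \<and> (\<forall>p\<in>set ps. primitive p) \<and> \<sigma> = odot_chain ps)"
proof (induction k)
  case 0 then show ?case by simp
next
  case (Suc k)
  show ?case
  proof (intro allI impI)
    fix \<sigma> n assume S: "\<sigma> \<in> S_prec n (Suc k) 1"
    show "\<exists>ps. length ps = Suc k \<and> (\<forall>p\<in>set ps. primitive p) \<and> \<sigma> = odot_chain ps"
    proof (cases k)
      case 0
      have perm: "is_perm n \<sigma>" using S unfolding S_prec_def avoids_1324_def by auto
      obtain \<alpha> \<beta> \<gamma> where sg0: "\<sigma> = \<alpha> @ 1 # \<beta> @ n # \<gamma>" and lb: "length \<beta> = 0"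
        using sprec_struct[OF S] 0 by auto
      have "n \<in> set \<sigma>" "n \<noteq> 1" using sg0 lb perm unfolding is_perm_def by auto
      then have "n \<ge> 2" using perm unfolding is_perm_def by auto
      then have "primitive \<sigma>" unfolding primitive_def using S 0 by auto
      then show ?thesis using 0 by (intro exI[of _ "[\<sigma>]"]) simp
    next
      case (Suc k')
      obtain s1 s2 where h: "primitive s1" "s2 \<in> S_prec (n - length s1 + 1) k 1" "\<sigma> = odot s1 s2"
        using step[OF S] Suc by auto
      obtain ps where ps: "length ps = k" "\<forall>p\<in>set ps. primitive p" "s2 = odot_chain ps"
      proof -
        have "1 \<le> k" using Suc by simp
        then show ?thesis using Suc.IH h(2) that by blast
      qed
      obtain q qs where "ps = q # qs" using ps(1) Suc by (cases ps) auto
      then have "odot_chain (s1 # ps) = odot s1 (odot_chain ps)" by simp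
      then show ?thesis using h ps by (intro exI[of _ "s1 # ps"]) auto
    qed
  qed
qed



theorem corollary2p5:
  fixes n k :: nat and \<sigma> :: "nat list"
  assumes "k \<ge> 1" and "n \<ge> k + 1" and "\<sigma> \<in> S_prec n k 1"
  shows "(\<exists>!ps. length ps = k \<and> (\<forall>p\<in>set ps. primitive p) \<and> \<sigma> = odot_chain ps)
    \<and> (\<forall>ps. length ps = k \<and> (\<forall>p\<in>set ps. primitive p) \<and> \<sigma> = odot_chain ps
          \<longrightarrow> sum_list (map length ps) = n + k - 1)"
proof
  obtain ps where ps: "length ps = k" "\<forall>p\<in>set ps. primitive p" "\<sigma> = odot_chain ps"
    using exist assms(1,3) by blast
  show "\<exists>!ps. length ps = k \<and> (\<forall>p\<in>set ps. primitive p) \<and> \<sigma> = odot_chain ps"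
  proof (rule ex1I[of _ ps])
    show "length ps = k \<and> (\<forall>p\<in>set ps. primitive p) \<and> \<sigma> = odot_chain ps" using ps by blast
  next
    fix qs assume q: "length qs = k \<and> (\<forall>p\<in>set qs. primitive p) \<and> \<sigma> = odot_chain qs"
    have "ps \<noteq> []" using ps(1) assms(1) by auto
    then have "ps = qs" using uniq[of ps] ps q by auto
    then show "qs = ps" by simp
  qed
  have ln: "length \<sigma> = n" using assms(3) unfolding S_prec_def avoids_1324_def is_perm_def by auto
  show "\<forall>ps. length ps = k \<and> (\<forall>p\<in>set ps. primitive p) \<and> \<sigma> = odot_chain ps
          \<longrightarrow> sum_list (map length ps) = n + k - 1"
  proof (intro allI impI)
    fix qs assume q: "length qs = k \<and> (\<forall>p\<in>set qs. primitive p) \<and> \<sigma> = odot_chain qs"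
    have "qs \<noteq> []" using q assms(1) by auto
    then have "length (odot_chain qs) + (length qs - 1) = sum_list (map length qs)"
      using chain[of qs] q by blast
    then show "sum_list (map length qs) = n + k - 1" using q ln assms(1) by auto
  qed
qed

end
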